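(* Let $\rho > 0$ and $A \in L(H)$. Then the following are equivalent: (i) $\tau - A$ has an inverse $(\tau - A)^{-1} \in L(\ell_{2,\rho}(\mathbb{Z}; H))$ and this inverse is causal; (ii) $(\tau - A)^{-1} \in L(\ell_{2,\rho}(\mathbb{Z}; H))$ and $\operatorname{spt} (\tau - A)^{-1} \delta_{-1} x \subseteq \mathbb{Z}_{\geq 0}$ for all $x \in H$; (iii) $\rho > r(A)$.
   Context: $H$ is a separable complex Hilbert space, $L(X)$ denotes bounded linear operators on $X$. $\ell_{2,\rho}(\mathbb{Z}; H) = \{x \in H^{\mathbb{Z}} : \sum_{k} |x_k|_H^2 \rho^{-2k} < \infty\}$ with norm $(\sum_k|x_k|_H^2\rho^{-2k})^{1/2}$. $\tau$ is the shift $(\tau x)_k = x_{k+1}$, and $A$ also denotes the operator $x\mapsto (Ax_k)_{k\in\mathbb{Z}}$ on $\ell_{2,\rho}(\mathbb{Z};H)$. $\operatorname{spt} x = \{k : x_k \neq 0\}$; $\delta_{-1}x\in H^{\mathbb{Z}}$ is the sequence with entry $x$ at index $-1$ and $0$ elsewhere. $r(A) = \sup\{|z| : z\in\sigma(A)\}$ is the spectral radius. A linear operator $B$ on $\ell_{2,\rho}(\mathbb{Z};H)$ is causal if for all $a\in\mathbb{Z}$ and $f\in\ell_{2,\rho}(\mathbb{Z};H)$, $\operatorname{spt} f\subseteq\mathbb{Z}_{\geq a}$ implies $\operatorname{spt} Bf\subseteq\mathbb{Z}_{\geq a}$. *)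

theory Defs
  imports "HOL-Analysis.Analysis"
begin

text \<open>A complex Hilbert space is modelled as a Banach space type 'a (real structure from the
  library) together with a complex scalar multiplication sc extending the real one and a
  complex inner product ip (linear in the second, conjugate-linear in the first argument)
  inducing the norm.\<close>

definition complex_hilbert :: "(complex \<Rightarrow> 'a::banach \<Rightarrow> 'a) \<Rightarrow> ('a \<Rightarrow> 'a \<Rightarrow> complex) \<Rightarrow> bool" where
  "complex_hilbert sc ip \<longleftrightarrow>
     (\<forall>c x y. sc c (x + y) = sc c x + sc c y) \<and>
     (\<forall>c d x. sc (c + d) x = sc c x + sc d x) \<and>
     (\<forall>c d x. sc c (sc d x) = sc (c * d) x) \<and>
     (\<forall>x. sc 1 x = x) \<and>
     (\<forall>r x. sc (complex_of_real r) x = r *\<^sub>R x) \<and>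
     (\<forall>x y. ip x y = cnj (ip y x)) \<and>
     (\<forall>x y z. ip x (y + z) = ip x y + ip x z) \<and>
     (\<forall>c x y. ip x (sc c y) = c * ip x y) \<and>
     (\<forall>x. 0 \<le> Re (ip x x)) \<and>
     (\<forall>x. norm x = sqrt (Re (ip x x)))"

definition separable_space :: "'a::topological_space itself \<Rightarrow> bool" where
  "separable_space _ \<longleftrightarrow> (\<exists>D::'a set. countable D \<and> closure D = UNIV)"

definition bounded_clinear_op :: "(complex \<Rightarrow> 'a::banach \<Rightarrow> 'a) \<Rightarrow> ('a \<Rightarrow> 'a) \<Rightarrow> bool" where
  "bounded_clinear_op sc T \<longleftrightarrow> bounded_linear T \<and> (\<forall>c x. T (sc c x) = sc c (T x))"

definition op_spectrum :: "(complex \<Rightarrow> 'a::banach \<Rightarrow> 'a) \<Rightarrow> ('a \<Rightarrow> 'a) \<Rightarrow> complex set" where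
  "op_spectrum sc A = {z. \<not> (\<exists>B. bounded_clinear_op sc B \<and>
        (\<forall>x. B (sc z x - A x) = x) \<and> (\<forall>x. sc z (B x) - A (B x) = x))}"

text \<open>Spectral radius, as an extended real (equal to -infinity for an empty spectrum).\<close>
definition spectral_radius :: "(complex \<Rightarrow> 'a::banach \<Rightarrow> 'a) \<Rightarrow> ('a \<Rightarrow> 'a) \<Rightarrow> ereal" where
  "spectral_radius sc A = Sup ((\<lambda>z. ereal (cmod z)) ` op_spectrum sc A)"

definition l2rho :: "real \<Rightarrow> (int \<Rightarrow> 'a::real_normed_vector) set" where
  "l2rho \<rho> = {x. (\<lambda>k. (norm (x k))\<^sup>2 * \<rho> powi (-2 * k)) summable_on UNIV}"

definition l2rho_norm :: "real \<Rightarrow> (int \<Rightarrow> 'a::real_normed_vector) \<Rightarrow> real" where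
  "l2rho_norm \<rho> x = sqrt (\<Sum>\<^sub>\<infinity>k. (norm (x k))\<^sup>2 * \<rho> powi (-2 * k))"

definition bounded_op_l2rho :: "real \<Rightarrow> (complex \<Rightarrow> 'a::banach \<Rightarrow> 'a) \<Rightarrow>
    ((int \<Rightarrow> 'a) \<Rightarrow> (int \<Rightarrow> 'a)) \<Rightarrow> bool" where
  "bounded_op_l2rho \<rho> sc B \<longleftrightarrow>
     (\<forall>x\<in>l2rho \<rho>. B x \<in> l2rho \<rho>) \<and>
     (\<forall>x\<in>l2rho \<rho>. \<forall>y\<in>l2rho \<rho>. B (\<lambda>k. x k + y k) = (\<lambda>k. B x k + B y k)) \<and>
     (\<forall>c. \<forall>x\<in>l2rho \<rho>. B (\<lambda>k. sc c (x k)) = (\<lambda>k. sc c (B x k))) \<and>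
     (\<exists>C. \<forall>x\<in>l2rho \<rho>. l2rho_norm \<rho> (B x) \<le> C * l2rho_norm \<rho> x)"

definition shift_minus :: "('a::ab_group_add \<Rightarrow> 'a) \<Rightarrow> (int \<Rightarrow> 'a) \<Rightarrow> (int \<Rightarrow> 'a)" where
  "shift_minus A x = (\<lambda>k. x (k + 1) - A (x k))"

definition is_inverse_l2rho :: "real \<Rightarrow> ('a::real_normed_vector \<Rightarrow> 'a) \<Rightarrow> ((int \<Rightarrow> 'a) \<Rightarrow> (int \<Rightarrow> 'a)) \<Rightarrow> bool" where
  "is_inverse_l2rho \<rho> A B \<longleftrightarrow>
     (\<forall>x\<in>l2rho \<rho>. B (shift_minus A x) = x \<and> shift_minus A (B x) = x)"

definition spt :: "(int \<Rightarrow> 'a::zero) \<Rightarrow> int set" where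
  "spt x = {k. x k \<noteq> 0}"

definition delta_m1 :: "'a::zero \<Rightarrow> int \<Rightarrow> 'a" where
  "delta_m1 x = (\<lambda>k. if k = -1 then x else 0)"

definition causal_l2rho :: "real \<Rightarrow> ((int \<Rightarrow> 'a::real_normed_vector) \<Rightarrow> (int \<Rightarrow> 'a)) \<Rightarrow> bool" where
  "causal_l2rho \<rho> B \<longleftrightarrow>
     (\<forall>a. \<forall>f\<in>l2rho \<rho>. spt f \<subseteq> {a..} \<longrightarrow> spt (B f) \<subseteq> {a..})"

end

theory Submission
  imports Defs "HOL-Complex_Analysis.Complex_Analysis"
begin


locale hilb =
  fixes sc :: "complex \<Rightarrow> 'a::banach \<Rightarrow> 'a"
    and ip :: "'a \<Rightarrow> 'a \<Rightarrow> complex"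
  assumes H: "complex_hilbert sc ip"
begin

lemma sc_add: "sc c (x + y) = sc c x + sc c y"
  using H unfolding complex_hilbert_def by metis
lemma sc_addc: "sc (c + d) x = sc c x + sc d x"
  using H unfolding complex_hilbert_def by metis
lemma sc_sc: "sc c (sc d x) = sc (c * d) x"
  using H unfolding complex_hilbert_def by metis
lemma sc_one[simp]: "sc 1 x = x"
  using H unfolding complex_hilbert_def by metis
lemma sc_real: "sc (complex_of_real r) x = r *\<^sub>R x"
  using H unfolding complex_hilbert_def by metis
lemma ip_cnj: "ip x y = cnj (ip y x)"
  using H unfolding complex_hilbert_def by metis
lemma ip_add: "ip x (y + z) = ip x y + ip x z"
  using H unfolding complex_hilbert_def by metis
lemma ip_sc: "ip x (sc c y) = c * ip x y"
  using H unfolding complex_hilbert_def by metis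
lemma ip_nonneg: "0 \<le> Re (ip x x)"
  using H unfolding complex_hilbert_def by metis
lemma norm_ip: "norm x = sqrt (Re (ip x x))"
  using H unfolding complex_hilbert_def by metis

lemma sc_zero[simp]: "sc c 0 = 0"
  using sc_add[of c 0 0] by simp
lemma sc_zero_left[simp]: "sc 0 x = 0"
  using sc_real[of 0 x] by simp
lemma sc_minus: "sc c (- x) = - sc c x"
  using sc_add[of c x "-x"] by (simp add: eq_neg_iff_add_eq_0 add.commute)
lemma sc_diff: "sc c (x - y) = sc c x - sc c y"
  using sc_add[of c x "-y"] sc_minus by simp
lemma sc_scaleR: "sc c (r *\<^sub>R x) = r *\<^sub>R sc c x"
  by (metis sc_real sc_sc mult.commute)
lemma sc_comm: "sc c (sc d x) = sc d (sc c x)"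
  by (simp add: sc_sc mult.commute)

lemma ip_zero[simp]: "ip x 0 = 0"
  using ip_add[of x 0 0] by simp
lemma ip_diff: "ip x (y - z) = ip x y - ip x z"
  by (metis add_diff_cancel_right' diff_add_cancel ip_add)
lemma ip_add_left: "ip (x + y) z = ip x z + ip y z"
  by (metis ip_cnj ip_add complex_cnj_add)
lemma ip_sc_left: "ip (sc c x) z = cnj c * ip x z"
  by (metis ip_cnj ip_sc complex_cnj_mult)
lemma ip_diff_left: "ip (x - y) z = ip x z - ip y z"
  by (metis add_diff_cancel_right' diff_add_cancel ip_add_left)

lemma ip_self_real: "ip x x = complex_of_real ((norm x)\<^sup>2)"
proof -
  have "Im (ip x x) = 0" using ip_cnj[of x x] by (metis cnj.sel(2) equation_minus_iff zero_complex.simps(2) complex_eq_iff neg_equal_zero)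
  moreover have "Re (ip x x) = (norm x)\<^sup>2" using norm_ip[of x] ip_nonneg[of x] by simp
  ultimately show ?thesis by (simp add: complex_eq_iff)
qed

lemma cnj_mult_self: "cnj c * c = complex_of_real ((cmod c)\<^sup>2)"
  by (metis complex_norm_square mult.commute of_real_power)

lemma norm_sc: "norm (sc c x) = cmod c * norm x"
proof -
  have "ip (sc c x) (sc c x) = cnj c * c * ip x x" by (simp add: ip_sc ip_sc_left)
  then have "complex_of_real ((norm (sc c x))\<^sup>2) = complex_of_real ((cmod c)\<^sup>2 * (norm x)\<^sup>2)"
    by (simp add: ip_self_real cnj_mult_self)
  then have "(norm (sc c x))\<^sup>2 = (cmod c * norm x)\<^sup>2" unfolding of_real_eq_iff by (simp add: power_mult_distrib)
  then show ?thesis by (simp add: power2_eq_iff_nonneg)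
qed

lemma bl_sc: "bounded_linear (sc c)"
  by (rule bounded_linear_intro[where K="cmod c"]) (auto simp: sc_add sc_scaleR norm_sc)

lemma cauchy_schwarz: "cmod (ip x y) \<le> norm x * norm y"
proof (cases "x = 0")
  case True
  then show ?thesis using ip_zero ip_cnj by (metis complex_cnj_zero norm_zero order_refl mult_zero_left)
next
  case False
  then have nx: "norm x > 0" by simp
  define c where "c = ip x y / complex_of_real ((norm x)\<^sup>2)"
  have "0 \<le> Re (ip (y - sc c x) (y - sc c x))" by (rule ip_nonneg)
  also have "ip (y - sc c x) (y - sc c x) = ip y y - c * ip y x - cnj c * ip x y + cnj c * c * ip x x"
    by (simp add: ip_diff ip_diff_left ip_sc ip_sc_left algebra_simps)
  also have "cnj c * ip x y = complex_of_real ((cmod (ip x y))\<^sup>2 / (norm x)\<^sup>2)"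
    unfolding c_def by (simp add: cnj_mult_self)
  also have "c * ip y x = complex_of_real ((cmod (ip x y))\<^sup>2 / (norm x)\<^sup>2)"
    unfolding c_def using ip_cnj[of y x] cnj_mult_self[of "ip x y"] by (simp add: mult.commute)
  also have "cnj c * c * ip x x = complex_of_real ((cmod (ip x y))\<^sup>2 / (norm x)\<^sup>2)"
  proof -
    have "cnj c * c = complex_of_real ((cmod c)\<^sup>2)" by (rule cnj_mult_self)
    also have "cmod c = cmod (ip x y) / (norm x)\<^sup>2" unfolding c_def by (simp add: norm_divide norm_power del: of_real_power)
    finally show ?thesis using nx by (simp add: ip_self_real power2_eq_square)
  qed
  finally have "0 \<le> (norm y)\<^sup>2 - (cmod (ip x y))\<^sup>2 / (norm x)\<^sup>2"
    by (simp add: ip_self_real)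
  then have "(cmod (ip x y))\<^sup>2 \<le> (norm x * norm y)\<^sup>2" using nx by (simp add: field_simps power_mult_distrib)
  then show ?thesis by (simp add: abs_le_square_iff)
qed

lemma bl_ip: "bounded_linear (ip v)"
proof (rule bounded_linear_intro[where K="norm v"])
  show "ip v (x + y) = ip v x + ip v y" for x y by (rule ip_add)
  show "ip v (r *\<^sub>R x) = r *\<^sub>R ip v x" for r x
    by (metis sc_real ip_sc scaleR_conv_of_real)
  show "norm (ip v x) \<le> norm x * norm v" for x using cauchy_schwarz[of v x] by (simp add: mult.commute)
qed

end


lemma geo_summable:
  fixes f :: "nat \<Rightarrow> 'b::banach"
  assumes "\<And>k. norm (f k) \<le> C * q ^ k" "0 \<le> q" "q < 1"
  shows "summable f" "norm (suminf f) \<le> C / (1 - q)"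
proof -
  have g: "summable (\<lambda>k. C * q ^ k)" using assms by (intro summable_mult summable_geometric) simp
  show sf: "summable f" by (rule summable_comparison_test'[OF g]) (use assms in auto)
  have sn: "summable (\<lambda>k. norm (f k))" by (rule summable_comparison_test'[OF g]) (use assms in auto)
  have "norm (suminf f) \<le> (\<Sum>k. norm (f k))" by (rule summable_norm[OF sn])
  also have "\<dots> \<le> (\<Sum>k. C * q ^ k)" by (rule suminf_le) (use assms sn g in auto)
  also have "\<dots> = C / (1 - q)" using assms by (simp add: suminf_mult suminf_geometric divide_simps)
  finally show "norm (suminf f) \<le> C / (1 - q)" .
qed

locale hop = hilb +
  fixes A :: "'a::banach \<Rightarrow> 'a"
  assumes Aop: "bounded_clinear_op sc A"
begin

lemma bl_A: "bounded_linear A" using Aop unfolding bounded_clinear_op_def by blast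
lemma A_sc: "A (sc c x) = sc c (A x)" using Aop unfolding bounded_clinear_op_def by blast
lemma A_add: "A (x + y) = A x + A y" using bl_A by (simp add: linear_simps)
lemma A_zero[simp]: "A 0 = 0" using bl_A by (simp add: linear_simps)
lemma A_diff: "A (x - y) = A x - A y" using bl_A by (simp add: linear_simps)

definition nA where "nA = onorm A"
lemma nA_nonneg: "0 \<le> nA" unfolding nA_def by (rule onorm_pos_le[OF bl_A])
lemma norm_A: "norm (A x) \<le> nA * norm x" unfolding nA_def by (rule onorm[OF bl_A])

lemma P_Suc: "(A ^^ Suc n) x = A ((A ^^ n) x)" by simp
lemma P_comm: "(A ^^ n) (A x) = A ((A ^^ n) x)" by (metis comp_apply funpow_Suc_right funpow.simps(2))
lemma P_Suc': "(A ^^ Suc n) x = (A ^^ n) (A x)" by (simp add: funpow_Suc_right del: funpow.simps)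
lemma P_plus: "(A ^^ (m + n)) x = (A ^^ m) ((A ^^ n) x)" by (simp add: funpow_add)
lemma bl_P: "bounded_linear (A ^^ n)"
  by (induction n) (auto intro: bounded_linear_ident bounded_linear_compose[OF bl_A])
lemma P_sc: "(A ^^ n) (sc c x) = sc c ((A ^^ n) x)"
  by (induction n) (auto simp: A_sc)
lemma P_add: "(A ^^ n) (x + y) = (A ^^ n) x + (A ^^ n) y"
  using bl_P[of n] by (simp add: linear_simps)
lemma P_diff: "(A ^^ n) (x - y) = (A ^^ n) x - (A ^^ n) y"
  using bl_P[of n] by (simp add: linear_simps)
lemma P_zero[simp]: "(A ^^ n) 0 = 0"
  using bl_P[of n] by (simp add: linear_simps)
lemma norm_P: "norm ((A ^^ n) x) \<le> nA ^ n * norm x"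
proof (induction n)
  case (Suc n)
  have "norm ((A ^^ Suc n) x) \<le> nA * norm ((A ^^ n) x)" using norm_A by simp
  also have "\<dots> \<le> nA * (nA ^ n * norm x)" using Suc nA_nonneg by (rule mult_left_mono)
  finally show ?case by (simp add: mult.assoc)
qed simp

lemma mk_bclin:
  assumes "\<And>x y. T (x + y) = T x + T y" "\<And>c x. T (sc c x) = sc c (T x)"
    "\<And>x. norm (T x) \<le> norm x * K"
  shows "bounded_clinear_op sc T"
  unfolding bounded_clinear_op_def
proof (intro conjI allI)
  show "bounded_linear T"
  proof (rule bounded_linear_intro[where K=K])
    show "T (r *\<^sub>R x) = r *\<^sub>R T x" for r x using assms(2)[of "complex_of_real r" x] by (simp add: sc_real)
  qed (use assms in auto)
qed (use assms in auto)

lemma neumann: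
  assumes M: "\<And>k x. norm ((A ^^ k) x) \<le> M * s ^ k * norm x" and s: "0 \<le> s" and w: "cmod w * s < 1"
  defines "T \<equiv> \<lambda>x. suminf (\<lambda>k. sc (w ^ k) ((A ^^ k) x))"
  shows "bounded_clinear_op sc T" "\<And>x. T x - sc w (A (T x)) = x" "\<And>x. T (x - sc w (A x)) = x"
proof -
  define q where "q = cmod w * s"
  have q: "0 \<le> q" "q < 1" using s w by (auto simp: q_def)
  have tb: "norm (sc (w ^ k) ((A ^^ k) x)) \<le> (\<bar>M\<bar> * norm x) * q ^ k" for k x
  proof -
    have "norm (sc (w ^ k) ((A ^^ k) x)) = cmod w ^ k * norm ((A ^^ k) x)" by (simp add: norm_sc norm_power)
    also have "\<dots> \<le> cmod w ^ k * (M * s ^ k * norm x)" by (rule mult_left_mono[OF M]) simp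
    also have "\<dots> \<le> cmod w ^ k * (\<bar>M\<bar> * s ^ k * norm x)"
      by (intro mult_left_mono mult_right_mono) (use s in auto)
    also have "\<dots> = (\<bar>M\<bar> * norm x) * q ^ k" by (simp add: q_def power_mult_distrib)
    finally show ?thesis .
  qed
  have summ: "summable (\<lambda>k. sc (w ^ k) ((A ^^ k) x))" for x using geo_summable(1)[OF tb q] .
  have Tb: "norm (T x) \<le> norm x * (\<bar>M\<bar> / (1 - q))" for x
    using geo_summable(2)[OF tb q, of x] unfolding T_def by (simp add: mult.commute)
  show "bounded_clinear_op sc T"
  proof (rule mk_bclin[OF _ _ Tb])
    show "T (x + y) = T x + T y" for x y
      unfolding T_def by (simp add: P_add sc_add suminf_add[OF summ summ])
    show "T (sc c x) = sc c (T x)" for c x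
      unfolding T_def by (simp add: P_sc sc_comm bounded_linear.suminf[OF bl_sc summ])
  qed
  show "T x - sc w (A (T x)) = x" for x
  proof -
    define a where "a k = sc (w ^ k) ((A ^^ k) x)" for k
    have sa: "summable a" using summ unfolding a_def .
    have "A (T x) = (\<Sum>k. A (a k))" unfolding T_def a_def by (rule bounded_linear.suminf[OF bl_A summ])
    then have "sc w (A (T x)) = (\<Sum>k. sc w (A (a k)))"
      using bounded_linear.suminf[OF bl_sc bounded_linear.summable[OF bl_A sa], of w] by simp
    also have "(\<lambda>k. sc w (A (a k))) = (\<lambda>k. a (Suc k))"
      unfolding a_def by (simp add: A_sc P_sc sc_sc)
    also have "(\<Sum>k. a (Suc k)) = T x - a 0" using suminf_split_head[OF sa] unfolding T_def a_def by simp
    finally show ?thesis unfolding a_def by simp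
  qed
  show "T (x - sc w (A x)) = x" for x
  proof -
    define a where "a k = sc (w ^ k) ((A ^^ k) x)" for k
    have "a \<longlonglongrightarrow> 0"
    proof -
      have "(\<lambda>k. (\<bar>M\<bar> * norm x) * q ^ k) \<longlonglongrightarrow> 0"
        using q by (intro tendsto_mult_right_zero LIMSEQ_power_zero) auto
      then show ?thesis unfolding a_def
        by (rule Lim_null_comparison[rotated]) (use tb in auto)
    qed
    from telescope_sums'[OF this] have "(\<lambda>k. a k - a (Suc k)) sums x" unfolding a_def by simp
    moreover have "sc (w ^ k) ((A ^^ k) (x - sc w (A x))) = a k - a (Suc k)" for k
      unfolding a_def by (simp add: P_diff P_sc sc_diff sc_sc P_comm mult.commute)
    ultimately show ?thesis unfolding T_def by (simp add: sums_iff)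
  qed
qed

end


context hop
begin

lemma bclin_comp: "bounded_clinear_op sc f \<Longrightarrow> bounded_clinear_op sc g \<Longrightarrow> bounded_clinear_op sc (\<lambda>x. f (g x))"
  unfolding bounded_clinear_op_def
  using bounded_linear_compose[of f g] by (auto simp: o_def)

lemma bclin_sc: "bounded_clinear_op sc (sc c)"
  unfolding bounded_clinear_op_def using bl_sc by (simp add: sc_comm)

lemma bclin_id: "bounded_clinear_op sc (\<lambda>x. x)"
  unfolding bounded_clinear_op_def by (simp add: bounded_linear_ident)

lemma bclin_P: "bounded_clinear_op sc (A ^^ n)"
  unfolding bounded_clinear_op_def using bl_P P_sc by blast

lemma notin_spec: "z \<notin> op_spectrum sc A \<longleftrightarrow> (\<exists>B. bounded_clinear_op sc B \<and>
        (\<forall>x. B (sc z x - A x) = x) \<and> (\<forall>x. sc z (B x) - A (B x) = x))"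
  unfolding op_spectrum_def by blast

lemma power_bound_notin_spec:
  assumes M: "\<And>k x. norm ((A ^^ k) x) \<le> M * s ^ k * norm x" and s: "0 \<le> s" and z: "s < cmod z"
  shows "z \<notin> op_spectrum sc A"
proof -
  define w where "w = 1 / z"
  have z0: "z \<noteq> 0" using s z by auto
  have wz: "w * z = 1" "z * w = 1" using z0 by (auto simp: w_def)
  have "cmod w * s < 1" using z s z0 by (simp add: w_def norm_divide divide_simps)
  note N = neumann[OF M s this]
  define T where "T = (\<lambda>x. suminf (\<lambda>k. sc (w ^ k) ((A ^^ k) x)))"
  have T: "bounded_clinear_op sc T" "\<And>x. T x - sc w (A (T x)) = x" "\<And>x. T (x - sc w (A x)) = x"
    using N unfolding T_def by auto
  have Tsc: "T (sc c x) = sc c (T x)" for c x using T(1) unfolding bounded_clinear_op_def by blast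
  show ?thesis unfolding notin_spec
  proof (intro exI conjI allI)
    show "bounded_clinear_op sc (\<lambda>x. sc w (T x))" by (rule bclin_comp[OF bclin_sc T(1)])
    show "sc w (T (sc z x - A x)) = x" for x
    proof -
      have "sc z x - A x = sc z (x - sc w (A x))" by (simp add: sc_diff sc_sc wz)
      then show ?thesis by (simp add: Tsc sc_sc wz T(3))
    qed
    show "sc z (sc w (T x)) - A (sc w (T x)) = x" for x
      by (simp add: sc_sc wz A_sc T(2))
  qed
qed

lemma power_bound_radius:
  assumes M: "\<And>k x. norm ((A ^^ k) x) \<le> M * s ^ k * norm x" and s: "0 \<le> s" "s < \<rho>"
  shows "spectral_radius sc A < ereal \<rho>"
proof -
  have "spectral_radius sc A \<le> ereal s"
    unfolding spectral_radius_def
  proof (rule Sup_least)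
    fix e assume "e \<in> (\<lambda>z. ereal (cmod z)) ` op_spectrum sc A"
    then obtain z where "z \<in> op_spectrum sc A" "e = ereal (cmod z)" by blast
    then show "e \<le> ereal s" using power_bound_notin_spec[OF M s(1), of z] by force
  qed
  also have "\<dots> < ereal \<rho>" using s by simp
  finally show ?thesis .
qed

definition invI where
  "invI w S \<longleftrightarrow> bounded_clinear_op sc S \<and> (\<forall>x. S (x - sc w (A x)) = x) \<and> (\<forall>x. S x - sc w (A (S x)) = x)"

lemma ex_invI:
  assumes G: "\<And>z. s0 < cmod z \<Longrightarrow> z \<notin> op_spectrum sc A" and s0: "0 < s0" and w: "cmod w < 1 / s0"
  shows "\<exists>S. invI w S"
proof (cases "w = 0")
  case True
  then show ?thesis unfolding invI_def using bclin_id by auto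
next
  case False
  define z where "z = 1 / w"
  have wz: "w * z = 1" "z * w = 1" using False by (auto simp: z_def)
  have "s0 < cmod z" using w s0 False by (simp add: z_def norm_divide field_simps)
  from G[OF this] obtain B where B: "bounded_clinear_op sc B" "\<And>x. B (sc z x - A x) = x"
    "\<And>x. sc z (B x) - A (B x) = x" unfolding notin_spec by blast
  have Bsc: "B (sc c x) = sc c (B x)" for c x using B(1) unfolding bounded_clinear_op_def by blast
  show ?thesis unfolding invI_def
  proof (intro exI conjI allI)
    show "bounded_clinear_op sc (\<lambda>x. sc z (B x))" by (rule bclin_comp[OF bclin_sc B(1)])
    show "sc z (B (x - sc w (A x))) = x" for x
    proof -
      have "sc z (B (x - sc w (A x))) = B (sc z x - A x)"
        by (simp add: Bsc[symmetric] sc_diff sc_sc wz)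
      then show ?thesis using B(2) by simp
    qed
    show "sc z (B x) - sc w (A (sc z (B x))) = x" for x
      by (simp add: A_sc sc_sc wz B(3))
  qed
qed

lemma invI_bl: "invI w S \<Longrightarrow> bounded_linear S"
  unfolding invI_def bounded_clinear_op_def by blast
lemma invI_sc: "invI w S \<Longrightarrow> S (sc c x) = sc c (S x)"
  unfolding invI_def bounded_clinear_op_def by blast
lemma invI_norm: "invI w S \<Longrightarrow> norm (S x) \<le> onorm S * norm x"
  using onorm invI_bl by blast
lemma invI_onorm_nonneg: "invI w S \<Longrightarrow> 0 \<le> onorm S"
  using onorm_pos_le invI_bl by blast

lemma res_id:
  assumes S: "invI w S" and S0: "invI w0 S0"
  shows "S x - S0 x = sc (w - w0) (S0 (A (S x)))"
proof -
  have l: "S0 (u - sc w0 (A u)) = u" for u using S0 unfolding invI_def by blast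
  have r: "S x - sc w (A (S x)) = x" using S unfolding invI_def by blast
  have S0a: "S0 (a + b) = S0 a + S0 b" for a b using invI_bl[OF S0] by (simp add: linear_simps)
  have "S x - sc w0 (A (S x)) = x + sc (w - w0) (A (S x))"
    using r by (simp add: sc_addc[symmetric] algebra_simps)
  then have "S x = S0 x + S0 (sc (w - w0) (A (S x)))" using l[of "S x"] S0a by metis
  then show ?thesis by (simp add: invI_sc[OF S0] algebra_simps)
qed

lemma res_diff_norm:
  assumes S: "invI w S" and S0: "invI w0 S0"
  shows "norm (S x - S0 x) \<le> cmod (w - w0) * (onorm S0 * nA * onorm S) * norm x"
proof -
  have "norm (S x - S0 x) = cmod (w - w0) * norm (S0 (A (S x)))" by (simp add: res_id[OF S S0] norm_sc)
  also have "norm (S0 (A (S x))) \<le> onorm S0 * (nA * (onorm S * norm x))"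
  proof -
    have "norm (S0 (A (S x))) \<le> onorm S0 * norm (A (S x))" by (rule invI_norm[OF S0])
    also have "\<dots> \<le> onorm S0 * (nA * norm (S x))"
      by (rule mult_left_mono[OF norm_A invI_onorm_nonneg[OF S0]])
    also have "\<dots> \<le> onorm S0 * (nA * (onorm S * norm x))"
      by (intro mult_left_mono invI_norm[OF S] nA_nonneg invI_onorm_nonneg[OF S0])
    finally show ?thesis .
  qed
  then have "cmod (w - w0) * norm (S0 (A (S x))) \<le> cmod (w - w0) * (onorm S0 * (nA * (onorm S * norm x)))"
    by (rule mult_left_mono) simp
  finally show ?thesis by (simp add: mult.assoc)
qed

lemma res_local_bound:
  assumes S: "invI w S" and S0: "invI w0 S0" and d: "cmod (w - w0) * nA * onorm S0 \<le> 1/2"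
  shows "onorm S \<le> 2 * onorm S0"
proof (rule onorm_bound)
  show "0 \<le> 2 * onorm S0" using invI_onorm_nonneg[OF S0] by simp
  fix x
  have "norm (S x) \<le> norm (S0 x) + norm (S x - S0 x)" by (metis add_diff_cancel_left' diff_add_cancel norm_triangle_ineq)
  also have "norm (S x - S0 x) = cmod (w - w0) * norm (S0 (A (S x)))" by (simp add: res_id[OF S S0] norm_sc)
  also have "norm (S0 (A (S x))) \<le> onorm S0 * (nA * norm (S x))"
    using invI_norm[OF S0, of "A (S x)"] mult_left_mono[OF norm_A invI_onorm_nonneg[OF S0]]
    by (meson order_trans)
  finally have "norm (S x) \<le> norm (S0 x) + cmod (w - w0) * (onorm S0 * (nA * norm (S x)))"
    by (meson add_left_mono mult_left_mono norm_ge_zero order_trans)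
  also have "cmod (w - w0) * (onorm S0 * (nA * norm (S x))) = (cmod (w - w0) * nA * onorm S0) * norm (S x)"
    by (simp add: algebra_simps)
  also have "\<dots> \<le> 1/2 * norm (S x)" by (rule mult_right_mono[OF d]) simp
  finally have "norm (S x) \<le> 2 * norm (S0 x)" by simp
  also have "\<dots> \<le> 2 * (onorm S0 * norm x)" using invI_norm[OF S0] by simp
  finally show "norm (S x) \<le> 2 * onorm S0 * norm x" by simp
qed

end


locale gel = hop +
  fixes s0 :: real
  assumes G: "\<And>z. s0 < cmod z \<Longrightarrow> z \<notin> op_spectrum sc A" and s0: "0 < s0"
begin

definition Sr where "Sr w = (SOME S. invI w S)"
definition Nf where "Nf w = onorm (Sr w)"
abbreviation "Bl \<equiv> ball (0::complex) (1 / s0)"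

lemma Sr: "w \<in> Bl \<Longrightarrow> invI w (Sr w)"
  using ex_invI[OF G s0, of w] someI_ex[of "invI w"] unfolding Sr_def by auto

lemma Nf_nonneg: "w \<in> Bl \<Longrightarrow> 0 \<le> Nf w"
  unfolding Nf_def using invI_onorm_nonneg[OF Sr] .

lemma ev_near:
  assumes w0: "w0 \<in> Bl"
  shows "eventually (\<lambda>w. w \<in> Bl \<and> cmod (w - w0) * nA * Nf w0 \<le> 1/2) (at w0)"
proof -
  have e1: "eventually (\<lambda>w. w \<in> Bl) (at w0)"
    using topological_tendstoD[OF tendsto_ident_at open_ball w0] .
  have "((\<lambda>w. cmod (w - w0) * (nA * Nf w0)) \<longlongrightarrow> 0 * (nA * Nf w0)) (at w0)"
    by (intro tendsto_intros tendsto_norm_zero LIM_zero tendsto_ident_at)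
  then have "eventually (\<lambda>w. cmod (w - w0) * (nA * Nf w0) < 1/2) (at w0)"
    by (rule order_tendstoD(2)) simp
  with e1 show ?thesis by eventually_elim (auto simp: mult.assoc)
qed

lemma cm_tendsto: "((\<lambda>w. cmod (w - w0)) \<longlongrightarrow> 0) (at w0)"
  using tendsto_norm_zero[OF LIM_zero[OF tendsto_ident_at]] .

lemma Sr_tendsto:
  assumes w0: "w0 \<in> Bl"
  shows "((\<lambda>w. Sr w x) \<longlongrightarrow> Sr w0 x) (at w0)"
proof (rule LIM_zero_cancel, rule Lim_null_comparison)
  show "eventually (\<lambda>w. norm (Sr w x - Sr w0 x) \<le> cmod (w - w0) * (Nf w0 * nA * (2 * Nf w0)) * norm x) (at w0)"
    using ev_near[OF w0]
  proof eventually_elim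
    case (elim w)
    then have b: "Nf w \<le> 2 * Nf w0" unfolding Nf_def
      using res_local_bound[OF Sr Sr[OF w0]] by (simp add: mult.commute mult.left_commute)
    have "norm (Sr w x - Sr w0 x) \<le> cmod (w - w0) * (Nf w0 * nA * Nf w) * norm x"
      unfolding Nf_def using res_diff_norm[OF Sr[of w] Sr[OF w0]] elim by simp
    also have "\<dots> \<le> cmod (w - w0) * (Nf w0 * nA * (2 * Nf w0)) * norm x"
      by (intro mult_right_mono mult_left_mono b) (use nA_nonneg Nf_nonneg[OF w0] in auto)
    finally show ?case .
  qed
  show "((\<lambda>w. cmod (w - w0) * (Nf w0 * nA * (2 * Nf w0)) * norm x) \<longlongrightarrow> 0) (at w0)"
    by (intro tendsto_mult_left_zero cm_tendsto)
qed

lemma Nf_cont: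
  assumes w0: "w0 \<in> Bl"
  shows "isCont Nf w0"
  unfolding isCont_def
proof (rule LIM_zero_cancel, rule Lim_null_comparison)
  show "eventually (\<lambda>w. norm (Nf w - Nf w0) \<le> cmod (w - w0) * (Nf w0 * nA * (2 * Nf w0))) (at w0)"
    using ev_near[OF w0]
  proof eventually_elim
    case (elim w)
    note S = Sr[of w] and S0 = Sr[OF w0]
    have "cmod (w - w0) * nA * onorm (Sr w0) \<le> 1/2" using elim by (simp add: Nf_def)
    from res_local_bound[OF Sr[OF conjunct1[OF elim]] Sr[OF w0] this]
    have b: "Nf w \<le> 2 * Nf w0" unfolding Nf_def .
    have nn: "0 \<le> Nf w" "0 \<le> Nf w0" using Nf_nonneg elim w0 by auto
    define d where "d = cmod (w - w0)"
    have d: "0 \<le> d" "cmod (w0 - w) = d" by (auto simp: d_def norm_minus_commute)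
    have "Nf w \<le> Nf w0 + d * (Nf w0 * nA * Nf w)"
      unfolding Nf_def
    proof (rule onorm_bound)
      show "0 \<le> onorm (Sr w0) + d * (onorm (Sr w0) * nA * onorm (Sr w))"
        using nn nA_nonneg d unfolding Nf_def by simp
      fix x
      have "norm (Sr w x) \<le> norm (Sr w0 x) + norm (Sr w x - Sr w0 x)"
        by (metis add_diff_cancel_left' diff_add_cancel norm_triangle_ineq)
      also have "\<dots> \<le> onorm (Sr w0) * norm x + d * (onorm (Sr w0) * nA * onorm (Sr w)) * norm x"
        using invI_norm[OF S0, of x] res_diff_norm[OF S[OF conjunct1[OF elim]] S0, of x] unfolding d_def by linarith
      finally show "norm (Sr w x) \<le> (onorm (Sr w0) + d * (onorm (Sr w0) * nA * onorm (Sr w))) * norm x"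
        by (simp add: algebra_simps)
    qed
    moreover have "Nf w0 \<le> Nf w + d * (Nf w * nA * Nf w0)"
      unfolding Nf_def
    proof (rule onorm_bound)
      show "0 \<le> onorm (Sr w) + d * (onorm (Sr w) * nA * onorm (Sr w0))"
        using nn nA_nonneg d unfolding Nf_def by simp
      fix x
      have "norm (Sr w0 x) \<le> norm (Sr w x) + norm (Sr w0 x - Sr w x)"
        by (metis add_diff_cancel_left' diff_add_cancel norm_triangle_ineq)
      also have "\<dots> \<le> onorm (Sr w) * norm x + d * (onorm (Sr w) * nA * onorm (Sr w0)) * norm x"
        using invI_norm[OF S[OF conjunct1[OF elim]], of x] res_diff_norm[OF S0 S[OF conjunct1[OF elim]], of x] unfolding d(2) by linarith
      finally show "norm (Sr w0 x) \<le> (onorm (Sr w) + d * (onorm (Sr w) * nA * onorm (Sr w0))) * norm x"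
        by (simp add: algebra_simps)
    qed
    ultimately have "\<bar>Nf w - Nf w0\<bar> \<le> d * (Nf w0 * nA * Nf w)" by (simp add: algebra_simps)
    also have "\<dots> \<le> d * (Nf w0 * nA * (2 * Nf w0))"
      by (intro mult_left_mono b) (use nn nA_nonneg d in auto)
    finally show ?case unfolding d_def by simp
  qed
  show "((\<lambda>w. cmod (w - w0) * (Nf w0 * nA * (2 * Nf w0))) \<longlongrightarrow> 0) (at w0)"
    by (intro tendsto_mult_left_zero cm_tendsto)
qed

lemma psi_deriv:
  assumes w0: "w0 \<in> Bl"
  shows "((\<lambda>w. ip v (Sr w x)) has_field_derivative ip v (Sr w0 (A (Sr w0 x)))) (at w0)"
  unfolding has_field_derivative_iff
proof (rule Lim_transform_eventually)
  have bl: "bounded_linear (\<lambda>u. ip v (Sr w0 (A u)))"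
    using bounded_linear_compose[OF bl_ip bounded_linear_compose[OF invI_bl[OF Sr[OF w0]] bl_A]] by (simp add: o_def)
  show "((\<lambda>w. ip v (Sr w0 (A (Sr w x)))) \<longlongrightarrow> ip v (Sr w0 (A (Sr w0 x)))) (at w0)"
    using bounded_linear.tendsto[OF bl Sr_tendsto[OF w0]] .
  have "eventually (\<lambda>w. w \<in> Bl \<and> w \<noteq> w0) (at w0)"
    using ev_near[OF w0] eventually_at_filter[of "\<lambda>w. w \<noteq> w0"]
    by (auto elim: eventually_mono simp: eventually_conj_iff eventually_at_filter)
  then show "eventually (\<lambda>w. ip v (Sr w0 (A (Sr w x))) = (ip v (Sr w x) - ip v (Sr w0 x)) / (w - w0)) (at w0)"
  proof eventually_elim
    case (elim w)
    have "ip v (Sr w x) - ip v (Sr w0 x) = ip v (Sr w x - Sr w0 x)" by (simp add: ip_diff)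
    also have "\<dots> = (w - w0) * ip v (Sr w0 (A (Sr w x)))"
      using res_id[OF Sr Sr[OF w0]] elim by (simp add: ip_sc)
    finally show ?case using elim by simp
  qed
qed

lemma psi_holo: "(\<lambda>w. ip v (Sr w x)) holomorphic_on Bl"
proof (subst holomorphic_on_open[OF open_ball], intro ballI exI)
  fix w assume "w \<in> Bl"
  then show "((\<lambda>w. ip v (Sr w x)) has_field_derivative ip v (Sr w (A (Sr w x)))) (at w)" by (rule psi_deriv)
qed

end


context gel
begin

lemma coeff_expansion:
  "(\<lambda>w. ip v (Sr w x)) has_fps_expansion Abs_fps (\<lambda>k. ip v ((A ^^ k) x))"
  unfolding has_fps_expansion_def
proof
  define c where "c k = ip v ((A ^^ k) x)" for k
  have cb: "cmod (c k) \<le> norm v * norm x * nA ^ k" for k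
  proof -
    have "cmod (c k) \<le> norm v * norm ((A ^^ k) x)" unfolding c_def by (rule cauchy_schwarz)
    also have "\<dots> \<le> norm v * (nA ^ k * norm x)" by (rule mult_left_mono[OF norm_P]) simp
    finally show ?thesis by (simp add: algebra_simps)
  qed
  define z0 where "z0 = complex_of_real (1 / (nA + 1))"
  have nA: "0 \<le> nA" by (rule nA_nonneg)
  have "summable (\<lambda>k. c k * z0 ^ k)"
  proof (rule geo_summable(1))
    show "norm (c k * z0 ^ k) \<le> (norm v * norm x) * (nA / (nA + 1)) ^ k" for k
    proof -
      have nz: "norm z0 = 1 / (nA + 1)" unfolding z0_def norm_of_real using nA by simp
      have "norm (c k * z0 ^ k) = cmod (c k) * (1 / (nA + 1)) ^ k"
        by (simp add: norm_mult norm_power nz)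
      also have "\<dots> \<le> norm v * norm x * nA ^ k * (1 / (nA + 1)) ^ k"
        by (rule mult_right_mono[OF cb]) (use nA in simp)
      finally show ?thesis by (simp add: power_divide)
    qed
    show "0 \<le> nA / (nA + 1)" "nA / (nA + 1) < 1" using nA by auto
  qed
  then have cr: "conv_radius c \<ge> norm z0" by (rule conv_radius_geI)
  have nz0: "norm z0 > 0" unfolding z0_def norm_of_real using nA by simp
  have e: "(($) (Abs_fps c)) = c" by (rule ext) simp
  have "ereal 0 < ereal (norm z0)" using nz0 by simp
  from order_less_le_trans[OF this cr]
  have "0 < fps_conv_radius (Abs_fps c)" unfolding fps_conv_radius_def e by (simp add: zero_ereal_def)
  then show "0 < fps_conv_radius (Abs_fps (\<lambda>k. ip v ((A ^^ k) x)))" unfolding c_def .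
  define r0 where "r0 = min (1 / (nA + 1)) (1 / s0)"
  have r0: "0 < r0" using nA s0 by (simp add: r0_def)
  show "eventually (\<lambda>w. eval_fps (Abs_fps (\<lambda>k. ip v ((A ^^ k) x))) w = ip v (Sr w x)) (nhds 0)"
    unfolding eventually_nhds
  proof (intro exI conjI ballI)
    show "open (ball 0 r0)" "(0::complex) \<in> ball 0 r0" using r0 by auto
    fix w :: complex assume w: "w \<in> ball 0 r0"
    have wl: "cmod w < 1 / (nA + 1)" "cmod w < 1 / s0" using w by (auto simp: r0_def)
    have wn: "cmod w * nA < 1"
    proof -
      have "cmod w * nA \<le> 1 / (nA + 1) * nA" by (rule mult_right_mono) (use wl nA in auto)
      also have "\<dots> < 1" using nA by (simp add: field_simps)
      finally show ?thesis .
    qed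
    have Mb: "norm ((A ^^ k) y) \<le> 1 * nA ^ k * norm y" for k y using norm_P by simp
    define T where "T = (\<lambda>y. suminf (\<lambda>k. sc (w ^ k) ((A ^^ k) y)))"
    note N = neumann[OF Mb nA wn, folded T_def]
    have SI: "invI w (Sr w)" using Sr wl by simp
    have "Sr w x = Sr w (T x - sc w (A (T x)))" using N(2) unfolding T_def by simp
    also have "\<dots> = T x" using SI unfolding invI_def by blast
    finally have "Sr w x = T x" .
    have summ: "summable (\<lambda>k. sc (w ^ k) ((A ^^ k) x))"
    proof (rule geo_summable(1))
      show "norm (sc (w ^ k) ((A ^^ k) x)) \<le> norm x * (cmod w * nA) ^ k" for k
      proof -
        have "norm (sc (w ^ k) ((A ^^ k) x)) = cmod w ^ k * norm ((A ^^ k) x)" by (simp add: norm_sc norm_power)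
        also have "\<dots> \<le> cmod w ^ k * (nA ^ k * norm x)" by (rule mult_left_mono[OF norm_P]) simp
        finally show ?thesis by (simp add: power_mult_distrib algebra_simps)
      qed
    qed (use wn nA in auto)
    have "ip v (Sr w x) = (\<Sum>k. ip v (sc (w ^ k) ((A ^^ k) x)))"
      unfolding \<open>Sr w x = T x\<close> T_def by (rule bounded_linear.suminf[OF bl_ip summ])
    also have "\<dots> = (\<Sum>k. ip v ((A ^^ k) x) * w ^ k)" by (simp add: ip_sc mult.commute)
    finally show "eval_fps (Abs_fps (\<lambda>k. ip v ((A ^^ k) x))) w = ip v (Sr w x)"
      by (simp add: eval_fps_def)
  qed
qed

lemma gelfand:
  assumes s1: "s0 < s1"
  shows "\<exists>M. \<forall>n x. norm ((A ^^ n) x) \<le> M * s1 ^ n * norm x"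
proof -
  have s1p: "0 < s1" using s0 s1 by simp
  define S1 where "S1 = sphere (0::complex) (1 / s1)"
  have inv: "1 / s1 < 1 / s0" using s0 s1 by (simp add: frac_less2)
  have cbsub: "cball (0::complex) (1 / s1) \<subseteq> Bl" using inv by auto
  have S1sub: "S1 \<subseteq> Bl" using cbsub unfolding S1_def by auto
  have "continuous_on S1 Nf" using Nf_cont S1sub by (auto intro!: continuous_at_imp_continuous_on)
  moreover have "S1 \<noteq> {}" unfolding S1_def using s1p
    by (metis empty_iff order_less_imp_le sphere_eq_empty zero_less_divide_1_iff not_le)
  ultimately obtain w1 where w1: "w1 \<in> S1" "\<And>y. y \<in> S1 \<Longrightarrow> Nf y \<le> Nf w1"
    using continuous_attains_sup[of S1 Nf] unfolding S1_def by (auto simp: compact_sphere)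
  define Nb where "Nb = Nf w1"
  have Nb0: "0 \<le> Nb" unfolding Nb_def using Nf_nonneg w1(1) S1sub by auto
  show ?thesis
  proof (intro exI allI)
    fix n x
    define v where "v = (A ^^ n) x"
    define \<psi> where "\<psi> = (\<lambda>w. ip v (Sr w x))"
    have CI: "norm ((deriv ^^ n) \<psi> 0) \<le> fact n * (norm v * Nb * norm x) / (1 / s1) ^ n"
    proof (rule Cauchy_inequality)
      show "\<psi> holomorphic_on ball 0 (1 / s1)" unfolding \<psi>_def
        by (rule holomorphic_on_subset[OF psi_holo]) (use cbsub in auto)
      show "continuous_on (cball 0 (1 / s1)) \<psi>" unfolding \<psi>_def
        by (rule continuous_on_subset[OF holomorphic_on_imp_continuous_on[OF psi_holo] cbsub])
      show "0 < 1 / s1" using s1p by simp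
      fix w :: complex assume "norm (0 - w) = 1 / s1"
      then have w: "w \<in> S1" unfolding S1_def by simp
      have "norm (\<psi> w) \<le> norm v * norm (Sr w x)" unfolding \<psi>_def by (rule cauchy_schwarz)
      also have "norm (Sr w x) \<le> Nf w * norm x" unfolding Nf_def
        by (rule invI_norm[OF Sr]) (use w S1sub in auto)
      also have "Nf w * norm x \<le> Nb * norm x" unfolding Nb_def by (rule mult_right_mono[OF w1(2)[OF w]]) simp
      finally show "norm (\<psi> w) \<le> norm v * Nb * norm x" by (simp add: mult_left_mono mult.assoc)
    qed
    have "ip v v = (deriv ^^ n) \<psi> 0 / fact n"
      using fps_nth_fps_expansion[OF coeff_expansion[of v x], of n] unfolding \<psi>_def v_def by simp
    then have "(deriv ^^ n) \<psi> 0 = fact n * ip v v" by (simp add: field_simps)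
    then have "norm ((deriv ^^ n) \<psi> 0) = fact n * cmod (ip v v)" by (simp add: norm_mult)
    moreover have "fact n * (norm v * Nb * norm x) / (1 / s1) ^ n = fact n * (norm v * Nb * norm x * s1 ^ n)"
      by (simp add: power_one_over)
    ultimately have "fact n * cmod (ip v v) \<le> fact n * (norm v * Nb * norm x * s1 ^ n)"
      using CI by simp
    then have "cmod (ip v v) \<le> norm v * Nb * norm x * s1 ^ n"
      by (rule mult_left_le_imp_le) simp
    moreover have "cmod (ip v v) = norm v * norm v"
      by (simp add: ip_self_real power2_eq_square norm_mult del: of_real_mult)
    ultimately have "norm v * norm v \<le> norm v * (Nb * s1 ^ n * norm x)"
      by (simp add: algebra_simps)
    then have "norm v \<le> Nb * s1 ^ n * norm x"
      using Nb0 s1p by (cases "norm v = 0") (auto simp: mult_le_cancel_left)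
    then show "norm ((A ^^ n) x) \<le> Nb * s1 ^ n * norm x" unfolding v_def .
  qed
qed

end


lemma powi_powr: "(0::real) < r \<Longrightarrow> r powi n = r powr (real_of_int n)"
  by (simp add: powr_real_of_int')

lemma l2_term: "(0::real) < r \<Longrightarrow> (norm (f k))\<^sup>2 * r powi (-2 * k) = (norm (f k) * r powr (- real_of_int k))\<^sup>2"
proof -
  assume r: "0 < r"
  have "r powi (-2 * k) = r powr (- real_of_int k) * r powr (- real_of_int k)"
    using r by (simp add: powi_powr powr_add[symmetric])
  then show ?thesis by (simp add: power2_eq_square)
qed

lemma finite_CS:
  fixes a b :: "nat \<Rightarrow> real"
  assumes "\<And>i. 0 \<le> a i"
  shows "(\<Sum>i\<in>I. a i * b i)\<^sup>2 \<le> (\<Sum>i\<in>I. a i) * (\<Sum>i\<in>I. a i * (b i)\<^sup>2)"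
proof -
  have "(\<Sum>i\<in>I. sqrt (a i) * (sqrt (a i) * b i))\<^sup>2 \<le> (\<Sum>i\<in>I. (sqrt (a i))\<^sup>2) * (\<Sum>i\<in>I. (sqrt (a i) * b i)\<^sup>2)"
    by (rule Cauchy_Schwarz_ineq_sum)
  moreover have "sqrt (a i) * (sqrt (a i) * b i) = a i * b i" for i using assms[of i]
    by (simp add: mult.assoc[symmetric])
  moreover have "(sqrt (a i))\<^sup>2 = a i" "(sqrt (a i) * b i)\<^sup>2 = a i * (b i)\<^sup>2" for i
    using assms[of i] by (auto simp: power_mult_distrib)
  ultimately show ?thesis by simp
qed

lemma suminf_CS:
  fixes b :: "nat \<Rightarrow> real"
  assumes q: "0 \<le> q" "q < 1" and b: "\<And>j. 0 \<le> b j" "\<And>j. b j \<le> C"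
  shows "(\<Sum>j. q ^ j * b j)\<^sup>2 \<le> (1 / (1 - q)) * (\<Sum>j. q ^ j * (b j)\<^sup>2)"
proof -
  have C: "0 \<le> C" using b[of 0] by linarith
  have s1: "summable (\<lambda>j. q ^ j * b j)"
  proof (rule geo_summable(1)[where C=C and q=q])
    show "norm (q ^ j * b j) \<le> C * q ^ j" for j
      using q b[of j] by (simp add: abs_mult mult.commute mult_right_mono)
  qed (use q in auto)
  have s2: "summable (\<lambda>j. q ^ j * (b j)\<^sup>2)"
  proof (rule geo_summable(1)[where C="C^2" and q=q])
    show "norm (q ^ j * (b j)\<^sup>2) \<le> C^2 * q ^ j" for j
      using q b[of j] power_mono[of "b j" C 2] by (simp add: abs_mult mult.commute mult_left_mono)
  qed (use q in auto)
  have sg: "summable (\<lambda>j. q ^ j)" using q by simp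
  have "(\<lambda>n. (\<Sum>j<n. q ^ j * b j)\<^sup>2) \<longlonglongrightarrow> (\<Sum>j. q ^ j * b j)\<^sup>2"
    by (intro tendsto_power summable_LIMSEQ s1)
  moreover have "(\<lambda>n. (\<Sum>j<n. q ^ j) * (\<Sum>j<n. q ^ j * (b j)\<^sup>2)) \<longlonglongrightarrow> (\<Sum>j. q ^ j) * (\<Sum>j. q ^ j * (b j)\<^sup>2)"
    by (intro tendsto_mult summable_LIMSEQ s2 sg)
  ultimately have "(\<Sum>j. q ^ j * b j)\<^sup>2 \<le> (\<Sum>j. q ^ j) * (\<Sum>j. q ^ j * (b j)\<^sup>2)"
    by (rule LIMSEQ_le) (use q in \<open>auto intro!: finite_CS\<close>)
  then show ?thesis using q by (simp add: suminf_geometric)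
qed

locale conv = hop +
  fixes \<rho> M s :: real
  assumes rho: "0 < \<rho>" and s: "0 \<le> s" "s < \<rho>" and M: "0 \<le> M"
    and Mb: "\<And>n x. norm ((A ^^ n) x) \<le> M * s ^ n * norm x"
begin

definition q where "q = s / \<rho>"
lemma q: "0 \<le> q" "q < 1" using rho s by (auto simp: q_def)

definition Bop where "Bop f k = (\<Sum>j. (A ^^ j) (f (k - 1 - int j)))"

lemma l2_pt:
  assumes f: "f \<in> l2rho \<rho>"
  shows "norm (f m) * \<rho> powr (- real_of_int m) \<le> l2rho_norm \<rho> f"
proof -
  have sf: "(\<lambda>k. (norm (f k))\<^sup>2 * \<rho> powi (-2 * k)) summable_on UNIV" using f unfolding l2rho_def by simp
  have "sum (\<lambda>k. (norm (f k))\<^sup>2 * \<rho> powi (-2 * k)) {m} \<le> infsum (\<lambda>k. (norm (f k))\<^sup>2 * \<rho> powi (-2 * k)) UNIV"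
    by (rule finite_sum_le_infsum[OF sf]) (use rho in auto)
  moreover have "(norm (f m))\<^sup>2 * \<rho> powi (-2 * m) = (norm (f m) * \<rho> powr (- real_of_int m))\<^sup>2"
    by (rule l2_term[OF rho])
  ultimately have "(norm (f m) * \<rho> powr (- real_of_int m))\<^sup>2 \<le> infsum (\<lambda>k. (norm (f k))\<^sup>2 * \<rho> powi (-2 * k)) UNIV"
    by simp
  then show ?thesis unfolding l2rho_norm_def by (rule real_le_rsqrt)
qed

lemma l2_pt':
  assumes f: "f \<in> l2rho \<rho>"
  shows "norm (f m) \<le> l2rho_norm \<rho> f * \<rho> powr (real_of_int m)"
proof -
  have "norm (f m) = (norm (f m) * \<rho> powr (- real_of_int m)) * \<rho> powr (real_of_int m)"
    using rho by (simp add: powr_minus field_simps)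
  also have "\<dots> \<le> l2rho_norm \<rho> f * \<rho> powr (real_of_int m)"
    by (rule mult_right_mono[OF l2_pt[OF f]]) simp
  finally show ?thesis .
qed

lemma l2_norm_nonneg: "0 \<le> l2rho_norm \<rho> f" unfolding l2rho_norm_def
  by (rule real_sqrt_ge_zero, rule infsum_nonneg) (use rho in simp)

lemma term_bound:
  assumes f: "f \<in> l2rho \<rho>"
  shows "norm ((A ^^ j) (f (k - int j))) \<le> (M * l2rho_norm \<rho> f * \<rho> powr (real_of_int k)) * q ^ j"
proof -
  have "norm ((A ^^ j) (f (k - int j))) \<le> M * s ^ j * norm (f (k - int j))" by (rule Mb)
  also have "\<dots> \<le> M * s ^ j * (l2rho_norm \<rho> f * \<rho> powr (real_of_int (k - int j)))"
    by (rule mult_left_mono[OF l2_pt'[OF f]]) (use M s in simp)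
  also have "\<rho> powr (real_of_int (k - int j)) = \<rho> powr (real_of_int k) / \<rho> ^ j"
    using rho by (simp add: powr_diff powr_realpow)
  finally show ?thesis by (simp add: q_def power_divide mult_ac)
qed

lemma Bop_summable:
  assumes f: "f \<in> l2rho \<rho>"
  shows "summable (\<lambda>j. (A ^^ j) (f (k - int j)))"
  by (rule geo_summable(1)[OF term_bound[OF f] q])

lemma Bop_summable':
  assumes f: "f \<in> l2rho \<rho>"
  shows "summable (\<lambda>j. (A ^^ j) (f (k - 1 - int j)))"
  using Bop_summable[OF f, of "k - 1"] .

end


context conv
begin

definition gg where "gg f m = norm (f m) * \<rho> powr (- real_of_int m)"
definition GG where "GG f = infsum (\<lambda>k. (norm (f k))\<^sup>2 * \<rho> powi (-2 * k)) UNIV"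

lemma GG_nonneg: "0 \<le> GG f" unfolding GG_def by (rule infsum_nonneg) (use rho in simp)
lemma nf_GG: "l2rho_norm \<rho> f = sqrt (GG f)" unfolding l2rho_norm_def GG_def ..

lemma gg_inv: "norm (f m) = gg f m * \<rho> powr (real_of_int m)"
  unfolding gg_def using rho by (simp add: powr_minus field_simps)

lemma gg_nonneg: "0 \<le> gg f m" unfolding gg_def by simp
lemma gg_le: "f \<in> l2rho \<rho> \<Longrightarrow> gg f m \<le> l2rho_norm \<rho> f" unfolding gg_def by (rule l2_pt)

lemma gg_sum:
  assumes f: "f \<in> l2rho \<rho>" and F: "finite F"
  shows "(\<Sum>m\<in>F. (gg f m)\<^sup>2) \<le> GG f"
proof -
  have sf: "(\<lambda>k. (norm (f k))\<^sup>2 * \<rho> powi (-2 * k)) summable_on UNIV" using f unfolding l2rho_def by simp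
  have "sum (\<lambda>k. (norm (f k))\<^sup>2 * \<rho> powi (-2 * k)) F \<le> GG f"
    unfolding GG_def by (rule finite_sum_le_infsum[OF sf F]) (use rho in auto)
  moreover have "(norm (f k))\<^sup>2 * \<rho> powi (-2 * k) = (gg f k)\<^sup>2" for k
    unfolding gg_def by (rule l2_term[OF rho])
  ultimately show ?thesis by simp
qed

lemma Bop_pt:
  assumes f: "f \<in> l2rho \<rho>"
  shows "norm (Bop f k) * \<rho> powr (- real_of_int k) \<le> (M / \<rho>) * (\<Sum>j. q ^ j * gg f (k - 1 - int j))"
proof -
  define nf where "nf = l2rho_norm \<rho> f"
  have tb: "norm ((A ^^ j) (f (k - 1 - int j))) \<le> \<rho> powr (real_of_int k) * (M / \<rho>) * (q ^ j * gg f (k - 1 - int j))" for j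
  proof -
    have "norm ((A ^^ j) (f (k - 1 - int j))) \<le> M * s ^ j * norm (f (k - 1 - int j))" by (rule Mb)
    also have "norm (f (k - 1 - int j)) = gg f (k - 1 - int j) * \<rho> powr (real_of_int (k - 1 - int j))"
      by (rule gg_inv)
    also have "\<rho> powr (real_of_int (k - 1 - int j)) = \<rho> powr (real_of_int k) / \<rho> / \<rho> ^ j"
      using rho by (simp add: powr_diff powr_realpow)
    finally show ?thesis using rho by (simp add: q_def power_divide field_simps)
  qed
  have sb: "summable (\<lambda>j. q ^ j * gg f (k - 1 - int j))"
  proof (rule geo_summable(1)[where C=nf and q=q])
    show "norm (q ^ j * gg f (k - 1 - int j)) \<le> nf * q ^ j" for j
    proof -
      have a: "0 \<le> gg f (k - 1 - int j)" "gg f (k - 1 - int j) \<le> nf" using gg_nonneg gg_le[OF f] nf_def by auto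
      have "q ^ j * gg f (k - 1 - int j) \<le> q ^ j * nf" by (rule mult_left_mono[OF a(2)]) (use q in simp)
      then show ?thesis using a q by (simp add: abs_mult mult.commute)
    qed
  qed (use q in auto)
  have sb': "summable (\<lambda>j. \<rho> powr (real_of_int k) * (M / \<rho>) * (q ^ j * gg f (k - 1 - int j)))"
    by (rule summable_mult[OF sb])
  have sn: "summable (\<lambda>j. norm ((A ^^ j) (f (k - 1 - int j))))"
    by (rule summable_comparison_test'[OF sb']) (use tb in simp)
  have "norm (Bop f k) \<le> (\<Sum>j. norm ((A ^^ j) (f (k - 1 - int j))))"
    unfolding Bop_def by (rule summable_norm[OF sn])
  also have "\<dots> \<le> (\<Sum>j. \<rho> powr (real_of_int k) * (M / \<rho>) * (q ^ j * gg f (k - 1 - int j)))"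
    by (rule suminf_le[OF tb sn sb'])
  also have "\<dots> = \<rho> powr (real_of_int k) * ((M / \<rho>) * (\<Sum>j. q ^ j * gg f (k - 1 - int j)))"
    using suminf_mult[OF sb, of "\<rho> powr (real_of_int k) * (M / \<rho>)"] by simp
  finally have "norm (Bop f k) \<le> \<rho> powr (real_of_int k) * ((M / \<rho>) * (\<Sum>j. q ^ j * gg f (k - 1 - int j)))" .
  then have "norm (Bop f k) * \<rho> powr (- real_of_int k) \<le> \<rho> powr (real_of_int k) * ((M / \<rho>) * (\<Sum>j. q ^ j * gg f (k - 1 - int j))) * \<rho> powr (- real_of_int k)"
    by (rule mult_right_mono) simp
  also have "\<dots> = (M / \<rho>) * (\<Sum>j. q ^ j * gg f (k - 1 - int j))"
    using rho by (simp add: powr_minus field_simps)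
  finally show ?thesis .
qed

lemma Bop_pt2:
  assumes f: "f \<in> l2rho \<rho>"
  shows "(norm (Bop f k) * \<rho> powr (- real_of_int k))\<^sup>2 \<le> (M / \<rho>)\<^sup>2 * (1 / (1 - q)) * (\<Sum>j. q ^ j * (gg f (k - 1 - int j))\<^sup>2)"
proof -
  have "(norm (Bop f k) * \<rho> powr (- real_of_int k))\<^sup>2 \<le> ((M / \<rho>) * (\<Sum>j. q ^ j * gg f (k - 1 - int j)))\<^sup>2"
    by (rule power_mono[OF Bop_pt[OF f]]) simp
  also have "\<dots> = (M / \<rho>)\<^sup>2 * (\<Sum>j. q ^ j * gg f (k - 1 - int j))\<^sup>2" by (rule power_mult_distrib)
  also have "\<dots> \<le> (M / \<rho>)\<^sup>2 * ((1 / (1 - q)) * (\<Sum>j. q ^ j * (gg f (k - 1 - int j))\<^sup>2))"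
    by (rule mult_left_mono[OF suminf_CS[OF q gg_nonneg gg_le[OF f]]]) simp
  finally show ?thesis by (simp add: mult.assoc)
qed

lemma Bop_l2:
  assumes f: "f \<in> l2rho \<rho>"
  shows "Bop f \<in> l2rho \<rho>" "l2rho_norm \<rho> (Bop f) \<le> (M / \<rho> / (1 - q)) * l2rho_norm \<rho> f"
proof -
  define t where "t k = (norm (Bop f k))\<^sup>2 * \<rho> powi (-2 * k)" for k
  define K where "K = (M / \<rho>)\<^sup>2 * (1 / (1 - q)) * (1 / (1 - q)) * GG f"
  have t_eq: "t k = (norm (Bop f k) * \<rho> powr (- real_of_int k))\<^sup>2" for k
    unfolding t_def by (rule l2_term[OF rho])
  have t0: "0 \<le> t k" for k unfolding t_eq by simp
  have fin: "sum t F \<le> K" if F: "finite F" for F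
  proof -
    have sj: "summable (\<lambda>j. q ^ j * (gg f (k - 1 - int j))\<^sup>2)" for k
    proof (rule geo_summable(1)[where C="GG f" and q=q])
      show "norm (q ^ j * (gg f (k - 1 - int j))\<^sup>2) \<le> GG f * q ^ j" for j
      proof -
        have "(gg f (k - 1 - int j))\<^sup>2 = (\<Sum>m\<in>{k - 1 - int j}. (gg f m)\<^sup>2)" by simp
        also have "\<dots> \<le> GG f" by (rule gg_sum[OF f]) simp
        finally show ?thesis using q by (simp add: abs_mult) (metis mult.commute mult_left_mono zero_le_power)
      qed
    qed (use q in auto)
    have "sum t F \<le> (\<Sum>k\<in>F. (M / \<rho>)\<^sup>2 * (1 / (1 - q)) * (\<Sum>j. q ^ j * (gg f (k - 1 - int j))\<^sup>2))"
      by (rule sum_mono) (use Bop_pt2[OF f] t_eq in simp)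
    also have "\<dots> = (M / \<rho>)\<^sup>2 * (1 / (1 - q)) * (\<Sum>k\<in>F. \<Sum>j. q ^ j * (gg f (k - 1 - int j))\<^sup>2)"
      by (simp only: sum_distrib_left)
    also have "(\<Sum>k\<in>F. \<Sum>j. q ^ j * (gg f (k - 1 - int j))\<^sup>2) = (\<Sum>j. \<Sum>k\<in>F. q ^ j * (gg f (k - 1 - int j))\<^sup>2)"
      by (rule suminf_sum[OF sj, symmetric])
    also have "(\<Sum>j. \<Sum>k\<in>F. q ^ j * (gg f (k - 1 - int j))\<^sup>2) \<le> (\<Sum>j. q ^ j * GG f)"
    proof (rule suminf_le)
      show "(\<Sum>k\<in>F. q ^ j * (gg f (k - 1 - int j))\<^sup>2) \<le> q ^ j * GG f" for j
      proof -
        have "(\<Sum>k\<in>F. (gg f (k - 1 - int j))\<^sup>2) = (\<Sum>m\<in>(\<lambda>k. k - 1 - int j) ` F. (gg f m)\<^sup>2)"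
          by (subst sum.reindex) (auto simp: inj_on_def)
        also have "\<dots> \<le> GG f" by (rule gg_sum[OF f]) (use F in simp)
        finally show ?thesis using q by (simp add: sum_distrib_left[symmetric] mult_left_mono)
      qed
      show "summable (\<lambda>j. \<Sum>k\<in>F. q ^ j * (gg f (k - 1 - int j))\<^sup>2)" by (rule summable_sum) (rule sj)
      show "summable (\<lambda>j. q ^ j * GG f)" using q by (intro summable_mult2 summable_geometric) simp
    qed
    then have "(M / \<rho>)\<^sup>2 * (1 / (1 - q)) * (\<Sum>j. \<Sum>k\<in>F. q ^ j * (gg f (k - 1 - int j))\<^sup>2)
        \<le> (M / \<rho>)\<^sup>2 * (1 / (1 - q)) * (\<Sum>j. q ^ j * GG f)"
      by (rule mult_left_mono) (use q in simp)
    also have "(\<Sum>j. q ^ j * GG f) = (1 / (1 - q)) * GG f"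
      using q suminf_mult2[of "\<lambda>j. q ^ j" "GG f"] by (simp add: suminf_geometric)
    finally show ?thesis unfolding K_def by (simp add: mult.assoc)
  qed
  have st: "t summable_on UNIV"
    by (rule nonneg_bdd_above_summable_on) (use t0 fin in \<open>auto intro!: bdd_aboveI[where M=K]\<close>)
  then show "Bop f \<in> l2rho \<rho>" unfolding l2rho_def t_def by simp
  have "infsum t UNIV \<le> K" by (rule infsum_le_finite_sums[OF st]) (use fin in auto)
  then have "l2rho_norm \<rho> (Bop f) \<le> sqrt K" unfolding l2rho_norm_def t_def by simp
  also have "sqrt K = (M / \<rho> / (1 - q)) * sqrt (GG f)"
  proof -
    have "K = (M / \<rho> / (1 - q))\<^sup>2 * GG f" unfolding K_def by (simp add: power2_eq_square)
    then show ?thesis using M rho q by (simp add: real_sqrt_mult)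
  qed
  finally show "l2rho_norm \<rho> (Bop f) \<le> (M / \<rho> / (1 - q)) * l2rho_norm \<rho> f" by (simp add: nf_GG)
qed

end


context conv
begin

lemma Bop_add:
  assumes x: "x \<in> l2rho \<rho>" and y: "y \<in> l2rho \<rho>"
  shows "Bop (\<lambda>k. x k + y k) = (\<lambda>k. Bop x k + Bop y k)"
proof
  fix k
  show "Bop (\<lambda>k. x k + y k) k = Bop x k + Bop y k"
    unfolding Bop_def P_add using suminf_add[OF Bop_summable'[OF x] Bop_summable'[OF y]] by simp
qed

lemma Bop_sc:
  assumes x: "x \<in> l2rho \<rho>"
  shows "Bop (\<lambda>k. sc c (x k)) = (\<lambda>k. sc c (Bop x k))"
proof
  fix k
  show "Bop (\<lambda>k. sc c (x k)) k = sc c (Bop x k)"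
    unfolding Bop_def P_sc using bounded_linear.suminf[OF bl_sc Bop_summable'[OF x]] by simp
qed

lemma a_tendsto:
  assumes x: "x \<in> l2rho \<rho>"
  shows "(\<lambda>j. (A ^^ j) (x (k - int j))) \<longlonglongrightarrow> 0"
proof (rule Lim_null_comparison)
  show "\<forall>\<^sub>F j in sequentially. norm ((A ^^ j) (x (k - int j))) \<le> (M * l2rho_norm \<rho> x * \<rho> powr (real_of_int k)) * q ^ j"
    using term_bound[OF x] by simp
  show "(\<lambda>j. (M * l2rho_norm \<rho> x * \<rho> powr (real_of_int k)) * q ^ j) \<longlonglongrightarrow> 0"
    using q by (intro tendsto_mult_right_zero LIMSEQ_power_zero) auto
qed

lemma Bop_left:
  assumes x: "x \<in> l2rho \<rho>"
  shows "Bop (shift_minus A x) = x"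
proof
  fix k
  define a where "a j = (A ^^ j) (x (k - int j))" for j
  have "(\<lambda>j. a j - a (Suc j)) sums (a 0 - 0)"
    by (rule telescope_sums'[OF a_tendsto[OF x, of k, folded a_def]])
  moreover have "(A ^^ j) (shift_minus A x (k - 1 - int j)) = a j - a (Suc j)" for j
  proof -
    have "(A ^^ j) (shift_minus A x (k - 1 - int j)) = (A ^^ j) (x (k - int j)) - (A ^^ j) (A (x (k - 1 - int j)))"
      unfolding shift_minus_def by (simp add: P_diff)
    also have "(A ^^ j) (A (x (k - 1 - int j))) = a (Suc j)"
      unfolding a_def P_Suc'[symmetric] by (simp add: algebra_simps)
    finally show ?thesis unfolding a_def by simp
  qed
  ultimately show "Bop (shift_minus A x) k = x k"
    unfolding Bop_def a_def by (simp add: sums_iff)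
qed

lemma Bop_right:
  assumes x: "x \<in> l2rho \<rho>"
  shows "shift_minus A (Bop x) = x"
proof
  fix k
  define a where "a j = (A ^^ j) (x (k - int j))" for j
  have sa: "summable a" unfolding a_def by (rule Bop_summable[OF x])
  have "Bop x (k + 1) = suminf a" unfolding Bop_def a_def by simp
  moreover have "A (Bop x k) = (\<Sum>j. a (Suc j))"
  proof -
    have "A (Bop x k) = (\<Sum>j. A ((A ^^ j) (x (k - 1 - int j))))"
      unfolding Bop_def by (rule bounded_linear.suminf[OF bl_A Bop_summable'[OF x]])
    also have "(\<lambda>j. A ((A ^^ j) (x (k - 1 - int j)))) = (\<lambda>j. a (Suc j))"
      unfolding a_def by (simp add: algebra_simps)
    finally show ?thesis .
  qed
  ultimately show "shift_minus A (Bop x) k = x k"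
    unfolding shift_minus_def using suminf_split_head[OF sa] by (simp add: a_def)
qed

lemma Bop_causal: "causal_l2rho \<rho> Bop"
  unfolding causal_l2rho_def
proof (intro allI ballI impI subsetI)
  fix a f k assume spt: "spt f \<subseteq> {a..}" and k: "k \<in> spt (Bop f)"
  show "k \<in> {a..}"
  proof (rule ccontr)
    assume "k \<notin> {a..}"
    then have "f (k - 1 - int j) = 0" for j using spt unfolding spt_def by auto
    then have "Bop f k = 0" unfolding Bop_def by simp
    then show False using k unfolding spt_def by simp
  qed
qed

lemma iii_to_i: "\<exists>B. is_inverse_l2rho \<rho> A B \<and> bounded_op_l2rho \<rho> sc B \<and> causal_l2rho \<rho> B"
proof (intro exI conjI)
  show "is_inverse_l2rho \<rho> A Bop" unfolding is_inverse_l2rho_def using Bop_left Bop_right by blast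
  show "causal_l2rho \<rho> Bop" by (rule Bop_causal)
  show "bounded_op_l2rho \<rho> sc Bop" unfolding bounded_op_l2rho_def
    using Bop_l2 Bop_add Bop_sc by blast
qed

end


context hop
begin

lemma delta_l2:
  assumes rho: "0 < (\<rho>::real)"
  shows "delta_m1 x \<in> l2rho \<rho>" "l2rho_norm \<rho> (delta_m1 x) = norm x * \<rho>"
proof -
  define t where "t k = (norm (delta_m1 x k))\<^sup>2 * \<rho> powi (-2 * k)" for k
  have z: "t k = 0" if "k \<in> UNIV - {-1}" for k using that unfolding t_def delta_m1_def by simp
  have "t summable_on UNIV \<longleftrightarrow> t summable_on {-1}"
    by (rule summable_on_cong_neutral) (use z in auto)
  then have "t summable_on UNIV" by simp
  then show "delta_m1 x \<in> l2rho \<rho>" unfolding l2rho_def t_def by simp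
  have "infsum t UNIV = infsum t {-1}"
    by (rule infsum_cong_neutral) (use z in auto)
  also have "\<dots> = (norm x)\<^sup>2 * \<rho>\<^sup>2" unfolding t_def delta_m1_def by simp
  finally have "infsum t UNIV = (norm x)\<^sup>2 * \<rho>\<^sup>2" .
  then show "l2rho_norm \<rho> (delta_m1 x) = norm x * \<rho>"
    unfolding l2rho_norm_def t_def using rho by (simp add: real_sqrt_mult)
qed

lemma i_to_ii:
  assumes rho: "0 < \<rho>" and inv: "is_inverse_l2rho \<rho> A B" and cau: "causal_l2rho \<rho> B"
  shows "spt (B (delta_m1 x)) \<subseteq> {0..}"
proof -
  define y where "y = B (delta_m1 x)"
  have d: "delta_m1 x \<in> l2rho \<rho>" by (rule delta_l2[OF rho])
  have "spt (delta_m1 x) \<subseteq> {-1..}" unfolding spt_def delta_m1_def by auto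
  then have sy: "spt y \<subseteq> {-1..}" using cau d unfolding causal_l2rho_def y_def by blast
  have sm: "shift_minus A y = delta_m1 x" using inv d unfolding is_inverse_l2rho_def y_def by blast
  have "(-2::int) \<notin> spt y" using sy by auto
  then have y2: "y (-2) = 0" unfolding spt_def by simp
  have "shift_minus A y (-2) = delta_m1 x (-2)" using sm by simp
  then have "y (-2 + 1) - A (y (-2)) = delta_m1 x (-2)" unfolding shift_minus_def .
  then have y1: "y (-1) = 0" using y2 unfolding delta_m1_def by simp
  show ?thesis unfolding y_def[symmetric]
  proof
    fix k assume k: "k \<in> spt y"
    then have "-1 \<le> k" using sy by auto
    moreover have "k \<noteq> -1" using k y1 unfolding spt_def by auto
    ultimately show "k \<in> {0..}" by auto
  qed
qed

end


context hop
begin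

lemma powi_nat_term: "0 < (r::real) \<Longrightarrow> (norm v)\<^sup>2 * r powi (-2 * int k) = (norm v / r ^ k)\<^sup>2"
proof -
  assume r: "0 < r"
  have "r powi (-2 * int k) = inverse (r ^ (2 * k))"
    by (metis mult_minus_left of_nat_mult of_nat_numeral power_int_minus power_int_of_nat)
  then show ?thesis using r by (simp add: power_divide power_mult field_simps power2_eq_square power_mult_distrib)
qed

lemma ii_to_iii:
  assumes rho: "0 < \<rho>" and inv: "is_inverse_l2rho \<rho> A B" and bd: "bounded_op_l2rho \<rho> sc B"
    and sp: "\<forall>x. spt (B (delta_m1 x)) \<subseteq> {0..}"
  shows "spectral_radius sc A < ereal \<rho>"
proof -
  obtain C where C: "\<forall>f\<in>l2rho \<rho>. l2rho_norm \<rho> (B f) \<le> C * l2rho_norm \<rho> f"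
    using bd unfolding bounded_op_l2rho_def by blast
  define K where "K = (C * \<rho>)\<^sup>2"
  have K0: "0 \<le> K" unfolding K_def by simp
  define b where "b x k = (norm ((A ^^ k) x) / \<rho> ^ k)\<^sup>2" for x k
  have b0: "0 \<le> b x k" for x k unfolding b_def by simp
  have psum: "(\<Sum>k<N. b x k) \<le> K * (norm x)\<^sup>2" for x N
  proof -
    define y where "y = B (delta_m1 x)"
    have d: "delta_m1 x \<in> l2rho \<rho>" by (rule delta_l2[OF rho])
    have yl: "y \<in> l2rho \<rho>" using bd d unfolding bounded_op_l2rho_def y_def by blast
    have sm: "shift_minus A y = delta_m1 x" using inv d unfolding is_inverse_l2rho_def y_def by blast
    have yneg: "y k = 0" if "k < 0" for k using sp that unfolding spt_def y_def by force
    have ypow: "y (int k) = (A ^^ k) x" for k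
    proof (induction k)
      case 0
      have "shift_minus A y (-1) = delta_m1 x (-1)" using sm by simp
      then have "y (-1 + 1) - A (y (-1)) = delta_m1 x (-1)" unfolding shift_minus_def .
      then show ?case using yneg[of "-1"] unfolding delta_m1_def by simp
    next
      case (Suc k)
      have "shift_minus A y (int k) = delta_m1 x (int k)" using sm by simp
      then have "y (int k + 1) - A (y (int k)) = delta_m1 x (int k)" unfolding shift_minus_def .
      then show ?case using Suc unfolding delta_m1_def by (simp add: add.commute)
    qed
    define t where "t k = (norm (y k))\<^sup>2 * \<rho> powi (-2 * k)" for k
    have st: "t summable_on UNIV" using yl unfolding l2rho_def t_def by simp
    have bt: "b x k = t (int k)" for k
      unfolding b_def t_def ypow by (rule powi_nat_term[OF rho, symmetric])
    have "(\<Sum>k<N. b x k) = (\<Sum>k\<in>int ` {..<N}. t k)"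
      by (subst sum.reindex) (auto simp: bt)
    also have "\<dots> \<le> infsum t UNIV" by (rule finite_sum_le_infsum[OF st]) (use rho in \<open>auto simp: t_def\<close>)
    also have "infsum t UNIV = (l2rho_norm \<rho> y)\<^sup>2"
    proof -
      have "0 \<le> infsum t UNIV" by (rule infsum_nonneg) (use rho in \<open>simp add: t_def\<close>)
      then show ?thesis unfolding l2rho_norm_def t_def by simp
    qed
    also have "\<dots> \<le> (C * (norm x * \<rho>))\<^sup>2"
    proof (rule power_mono)
      show "l2rho_norm \<rho> y \<le> C * (norm x * \<rho>)" using C d delta_l2[OF rho] unfolding y_def by metis
      show "0 \<le> l2rho_norm \<rho> y" unfolding l2rho_norm_def by (rule real_sqrt_ge_zero, rule infsum_nonneg) (use rho in simp)
    qed
    finally show ?thesis unfolding K_def by (simp add: power_mult_distrib mult_ac)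
  qed
  have single: "b x k \<le> K * (norm x)\<^sup>2" for x k
  proof -
    have "b x k \<le> (\<Sum>j<Suc k. b x j)" by (rule member_le_sum) (auto simp: b0)
    also have "\<dots> \<le> K * (norm x)\<^sup>2" by (rule psum)
    finally show ?thesis .
  qed
  have pb: "norm ((A ^^ k) x) \<le> sqrt K * \<rho> ^ k * norm x" for k x
  proof -
    have "(norm ((A ^^ k) x) / \<rho> ^ k)\<^sup>2 \<le> (sqrt K * norm x)\<^sup>2"
      using single[of x k] K0 unfolding b_def by (simp add: power_mult_distrib)
    then have "norm ((A ^^ k) x) / \<rho> ^ k \<le> sqrt K * norm x"
      by (rule power2_le_imp_le) (use K0 in simp)
    then show ?thesis using rho by (simp add: divide_simps mult_ac)
  qed
  have step: "b x n \<le> K * b x k" if "k \<le> n" for x n k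
  proof -
    have "(A ^^ n) x = (A ^^ (n - k)) ((A ^^ k) x)" using that P_plus[of "n - k" k x] by simp
    then have "norm ((A ^^ n) x) \<le> sqrt K * \<rho> ^ (n - k) * norm ((A ^^ k) x)" using pb by simp
    then have "norm ((A ^^ n) x) / \<rho> ^ n \<le> sqrt K * (norm ((A ^^ k) x) / \<rho> ^ k)"
      using rho that by (simp add: divide_simps power_diff mult_ac)
    then have "(norm ((A ^^ n) x) / \<rho> ^ n)\<^sup>2 \<le> (sqrt K * (norm ((A ^^ k) x) / \<rho> ^ k))\<^sup>2"
      by (rule power_mono) (use rho in simp)
    also have "(sqrt K * (norm ((A ^^ k) x) / \<rho> ^ k))\<^sup>2 = K * (norm ((A ^^ k) x) / \<rho> ^ k)\<^sup>2"
      unfolding power_mult_distrib[of "sqrt K"] using K0 by simp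
    finally show ?thesis unfolding b_def .
  qed
  have datko: "real n * b x n \<le> K\<^sup>2 * (norm x)\<^sup>2" for n x
  proof -
    have "real n * b x n = (\<Sum>k<n. b x n)" by simp
    also have "\<dots> \<le> (\<Sum>k<n. K * b x k)" by (rule sum_mono) (rule step, simp)
    also have "\<dots> = K * (\<Sum>k<n. b x k)" by (simp add: sum_distrib_left)
    also have "\<dots> \<le> K * (K * (norm x)\<^sup>2)" by (rule mult_left_mono[OF psum K0])
    finally show ?thesis by (simp add: power2_eq_square mult_ac)
  qed
  define N where "N = nat \<lceil>4 * K\<^sup>2\<rceil> + 1"
  have N: "0 < N" "4 * K\<^sup>2 < real N" unfolding N_def by auto linarith
  have halfN: "norm ((A ^^ N) x) \<le> 1/2 * \<rho> ^ N * norm x" for x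
  proof -
    have "real N * b x N \<le> K\<^sup>2 * (norm x)\<^sup>2" by (rule datko)
    also have "\<dots> \<le> real N / 4 * (norm x)\<^sup>2" by (rule mult_right_mono) (use N in auto)
    finally have "b x N \<le> (norm x / 2)\<^sup>2" using N by (simp add: power_divide field_simps)
    then have "norm ((A ^^ N) x) / \<rho> ^ N \<le> norm x / 2" unfolding b_def
      by (rule power2_le_imp_le) simp
    then show ?thesis using rho by (simp add: divide_simps mult_ac)
  qed
  define rt where "rt = root N (1/2)"
  have rt: "0 < rt" "rt < 1" "rt ^ N = 1/2" using N unfolding rt_def by (auto simp: real_root_gt_zero)
  define s where "s = \<rho> * rt"
  have s: "0 \<le> s" "s < \<rho>" using rt rho unfolding s_def by auto
  have pm: "norm ((A ^^ (N * m)) x) \<le> (1/2) ^ m * \<rho> ^ (N * m) * norm x" for m x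
  proof (induction m)
    case (Suc m)
    have "(A ^^ (N * Suc m)) x = (A ^^ N) ((A ^^ (N * m)) x)" using P_plus[of N "N * m"] by simp
    then have "norm ((A ^^ (N * Suc m)) x) \<le> 1/2 * \<rho> ^ N * norm ((A ^^ (N * m)) x)" using halfN by simp
    also have "\<dots> \<le> 1/2 * \<rho> ^ N * ((1/2) ^ m * \<rho> ^ (N * m) * norm x)"
      by (rule mult_left_mono[OF Suc]) (use rho in simp)
    finally show ?case by (simp add: power_add mult_ac)
  qed simp
  have gen: "norm ((A ^^ k) x) \<le> (2 * sqrt K) * s ^ k * norm x" for k x
  proof -
    define m where "m = k div N"
    define r where "r = k mod N"
    have k: "k = r + N * m" unfolding m_def r_def by simp
    have r: "r < N" unfolding r_def using N by simp
    have "norm ((A ^^ k) x) = norm ((A ^^ r) ((A ^^ (N * m)) x))" using k P_plus by metis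
    also have "\<dots> \<le> sqrt K * \<rho> ^ r * norm ((A ^^ (N * m)) x)" by (rule pb)
    also have "\<dots> \<le> sqrt K * \<rho> ^ r * ((1/2) ^ m * \<rho> ^ (N * m) * norm x)"
      by (rule mult_left_mono[OF pm]) (use rho K0 in simp)
    also have "\<dots> = sqrt K * \<rho> ^ k * (1/2) ^ m * norm x" using k by (simp add: power_add mult_ac)
    also have "\<dots> \<le> (2 * sqrt K) * s ^ k * norm x"
    proof -
      have "rt ^ N \<le> rt ^ r" by (rule power_decreasing) (use r rt in auto)
      have "rt ^ k = (rt ^ N) ^ m * rt ^ r" using k by (simp add: power_add power_mult mult.commute)
      then have rk: "rt ^ k = (1/2) ^ m * rt ^ r" unfolding rt(3) .
      have "(1/2) ^ m * (1/2) \<le> (1/2::real) ^ m * rt ^ r"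
        by (rule mult_left_mono) (use \<open>rt ^ N \<le> rt ^ r\<close> rt(3) in auto)
      then have "(1/2) ^ m * (1/2) \<le> rt ^ k" unfolding rk .
      then have "(1/2) ^ m \<le> 2 * rt ^ k" by simp
      then have "sqrt K * \<rho> ^ k * (1/2) ^ m \<le> sqrt K * \<rho> ^ k * (2 * rt ^ k)"
        by (rule mult_left_mono) (use rho K0 in simp)
      then have "sqrt K * \<rho> ^ k * (1/2) ^ m * norm x \<le> sqrt K * \<rho> ^ k * (2 * rt ^ k) * norm x"
        by (rule mult_right_mono) simp
      then show ?thesis by (simp add: s_def power_mult_distrib mult_ac)
    qed
    finally show ?thesis .
  qed
  show ?thesis by (rule power_bound_radius[OF gen s])
qed

end


theorem theorem3p7:
  fixes \<rho> :: real
    and sc :: "complex \<Rightarrow> 'a::banach \<Rightarrow> 'a"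
    and ip :: "'a \<Rightarrow> 'a \<Rightarrow> complex"
    and A :: "'a \<Rightarrow> 'a"
  assumes H: "complex_hilbert sc ip"
    and sep: "separable_space TYPE('a)"
    and rho: "\<rho> > 0"
    and A: "bounded_clinear_op sc A"
  shows "((\<exists>B. is_inverse_l2rho \<rho> A B \<and> bounded_op_l2rho \<rho> sc B \<and> causal_l2rho \<rho> B)
            \<longleftrightarrow> (\<exists>B. is_inverse_l2rho \<rho> A B \<and> bounded_op_l2rho \<rho> sc B \<and>
                     (\<forall>x. spt (B (delta_m1 x)) \<subseteq> {0..})))
       \<and> ((\<exists>B. is_inverse_l2rho \<rho> A B \<and> bounded_op_l2rho \<rho> sc B \<and>
                     (\<forall>x. spt (B (delta_m1 x)) \<subseteq> {0..}))
            \<longleftrightarrow> ereal \<rho> > spectral_radius sc A)"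
proof -
  interpret hop sc ip A by unfold_locales (fact H, fact A)
  have i_ii: "(\<exists>B. is_inverse_l2rho \<rho> A B \<and> bounded_op_l2rho \<rho> sc B \<and> (\<forall>x. spt (B (delta_m1 x)) \<subseteq> {0..}))"
    if "\<exists>B. is_inverse_l2rho \<rho> A B \<and> bounded_op_l2rho \<rho> sc B \<and> causal_l2rho \<rho> B"
    using that i_to_ii[OF rho] by blast
  have ii_iii: "spectral_radius sc A < ereal \<rho>"
    if "\<exists>B. is_inverse_l2rho \<rho> A B \<and> bounded_op_l2rho \<rho> sc B \<and> (\<forall>x. spt (B (delta_m1 x)) \<subseteq> {0..})"
    using that ii_to_iii[OF rho] by blast
  have iii_i: "\<exists>B. is_inverse_l2rho \<rho> A B \<and> bounded_op_l2rho \<rho> sc B \<and> causal_l2rho \<rho> B"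
    if sr: "spectral_radius sc A < ereal \<rho>"
  proof -
    obtain t where t: "spectral_radius sc A < ereal t" "ereal t < ereal \<rho>" using ereal_dense2[OF sr] by blast
    define s0 where "s0 = max t (\<rho> / 2)"
    have s0: "0 < s0" "s0 < \<rho>" "t \<le> s0" using t rho unfolding s0_def by auto
    have G: "z \<notin> op_spectrum sc A" if z: "s0 < cmod z" for z
    proof
      assume "z \<in> op_spectrum sc A"
      then have "ereal (cmod z) \<le> spectral_radius sc A" unfolding spectral_radius_def
        by (rule Sup_upper[OF imageI])
      then have "ereal (cmod z) < ereal t" using t(1) by (rule le_less_trans)
      then show False using z s0 by simp
    qed
    interpret g: gel sc ip A s0 by unfold_locales (use G s0 in auto)
    define s1 where "s1 = (s0 + \<rho>) / 2"
    have s1: "s0 < s1" "s1 < \<rho>" "0 \<le> s1" using s0 unfolding s1_def by auto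
    obtain M where M: "\<And>n x. norm ((A ^^ n) x) \<le> M * s1 ^ n * norm x" using g.gelfand[OF s1(1)] by blast
    have M': "norm ((A ^^ n) x) \<le> max M 0 * s1 ^ n * norm x" for n x
    proof -
      have "M * s1 ^ n * norm x \<le> max M 0 * s1 ^ n * norm x"
        by (intro mult_right_mono) (use s1 in auto)
      then show ?thesis using M[of n x] by linarith
    qed
    interpret c: conv sc ip A \<rho> "max M 0" s1 by unfold_locales (use rho s1 M' in auto)
    show ?thesis by (rule c.iii_to_i)
  qed
  show ?thesis using i_ii ii_iii iii_i by blast
qed


end
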